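(* Let $n,k,R$ be positive integers with $k<n$, and let $L=\min\{k,R\}$. The capacity (in bits per channel use) of the Coupon Collector Channel $\mathrm{CC}(n,k,R)$ is \[ \mathcal{C}_{\mathrm{CC}} \;=\; \log_2\binom{n}{k} \;-\; k^{-R}\sum_{\ell=1}^{L}\binom{k}{\ell}\genfrac{\{}{\}}{0pt}{}{R}{\ell}\,\ell!\,\log_2\binom{n-\ell}{k-\ell}, \] and this capacity is achieved by the uniform distribution on the input alphabet $\mathcal{X}$.
   Context: Let $\mathcal{M}$ be a set of $n$ distinct elements ("motifs") and $k$ an integer with $1\le k<n$. The input alphabet $\mathcal{X}$ is the set of all $k$-element subsets $\mathbf{x}\subset\mathcal{M}$, so $|\mathcal{X}|=\binom{n}{k}$. For a positive integer $R$, the Coupon Collector Channel $\mathrm{CC}(n,k,R)$ is the discrete memoryless channel which, on input $\mathbf{x}\in\mathcal{X}$, outputs $\mathbf{y}=(y_1,\dots,y_R)\in\mathcal{M}^R$ where $y_1,\dots,y_R$ are drawn independently and uniformly at random from $\mathbf{x}$ (so $P(\mathbf{y}\mid\mathbf{x})=k^{-R}$ if every $y_i\in\mathbf{x}$ and $0$ otherwise). The output alphabet $\mathcal{Y}$ is the set of $R$-tuples over $\mathcal{M}$ containing between $1$ and $L=\min\{k,R\}$ distinct elements. The capacity is $\max_{P_X} I(X;Y)$ over input distributions on $\mathcal{X}$. $\genfrac{\{}{\}}{0pt}{}{R}{\ell}=\frac{1}{\ell!}\sum_{i=0}^{\ell}(-1)^{\ell-i}\binom{\ell}{i}i^R$ denotes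 the Stirling number of the second kind. *)

theory Defs
  imports Complex_Main "HOL-Combinatorics.Stirling"
begin

definition cc_inputs :: "nat \<Rightarrow> nat \<Rightarrow> nat set set" where
  "cc_inputs n k = {x. x \<subseteq> {0..<n} \<and> card x = k}"

definition cc_outputs :: "nat \<Rightarrow> nat \<Rightarrow> nat list set" where
  "cc_outputs n R = {ys. length ys = R \<and> set ys \<subseteq> {0..<n}}"

definition cc_trans :: "nat \<Rightarrow> nat \<Rightarrow> nat set \<Rightarrow> nat list \<Rightarrow> real" where
  "cc_trans k R x ys = (if set ys \<subseteq> x then 1 / real k ^ R else 0)"

definition cc_input_dist :: "nat \<Rightarrow> nat \<Rightarrow> (nat set \<Rightarrow> real) \<Rightarrow> bool" where
  "cc_input_dist n k p \<longleftrightarrow> (\<forall>x\<in>cc_inputs n k. 0 \<le> p x) \<and> (\<Sum>x\<in>cc_inputs n k. p x) = 1"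

definition cc_out_prob :: "nat \<Rightarrow> nat \<Rightarrow> nat \<Rightarrow> (nat set \<Rightarrow> real) \<Rightarrow> nat list \<Rightarrow> real" where
  "cc_out_prob n k R p ys = (\<Sum>x\<in>cc_inputs n k. p x * cc_trans k R x ys)"

definition cc_mutual_info :: "nat \<Rightarrow> nat \<Rightarrow> nat \<Rightarrow> (nat set \<Rightarrow> real) \<Rightarrow> real" where
  "cc_mutual_info n k R p =
     (\<Sum>x\<in>cc_inputs n k. \<Sum>ys\<in>cc_outputs n R.
        if p x * cc_trans k R x ys = 0 then 0
        else p x * cc_trans k R x ys * log 2 (cc_trans k R x ys / cc_out_prob n k R p ys))"

definition cc_capacity :: "nat \<Rightarrow> nat \<Rightarrow> nat \<Rightarrow> real" where
  "cc_capacity n k R = Sup (cc_mutual_info n k R ` {p. cc_input_dist n k p})"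

definition cc_uniform :: "nat \<Rightarrow> nat \<Rightarrow> nat set \<Rightarrow> real" where
  "cc_uniform n k x = 1 / real (n choose k)"

end

theory Submission
  imports Defs
begin



lemma lists_set_eq_Suc:
  assumes "finite S"
  shows "{ys. length ys = Suc R \<and> set ys = S} =
    (\<Union>a\<in>S. (\<lambda>ys. a#ys) ` ({ys. length ys = R \<and> set ys = S} \<union> {ys. length ys = R \<and> set ys = S - {a}}))"
  (is "?L = ?R")
proof
  show "?L \<subseteq> ?R"
  proof
    fix zs assume "zs \<in> ?L"
    then obtain a ys where zs: "zs = a#ys" "length ys = R" "insert a (set ys) = S"
      by (cases zs) auto
    then have "set ys = S \<or> set ys = S - {a}" by auto
    with zs show "zs \<in> ?R" by auto
  qed
next
  show "?R \<subseteq> ?L"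
  proof
    fix zs assume "zs \<in> ?R"
    then obtain a ys where h: "a \<in> S" "zs = a#ys" "length ys = R" "set ys = S \<or> set ys = S - {a}" by blast
    then have "set zs = S" by auto
    with h show "zs \<in> ?L" by simp
  qed
qed

lemma card_lists_set_eq:
  assumes "finite S"
  shows "card {ys. length ys = R \<and> set ys = S} = fact (card S) * Stirling R (card S)"
  using assms
proof (induction R arbitrary: S)
  case 0
  then show ?case by (cases "card S") auto
next
  case (Suc R)
  have fin2: "finite {ys. length ys = R \<and> set ys = T}" if "finite T" for T
    by (rule finite_subset[OF _ finite_lists_length_eq[OF that, of R]]) auto
  have "card {ys. length ys = Suc R \<and> set ys = S} =
     (\<Sum>a\<in>S. card ((\<lambda>ys. a#ys) ` ({ys. length ys = R \<and> set ys = S} \<union> {ys. length ys = R \<and> set ys = S - {a}})))"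
    unfolding lists_set_eq_Suc[OF Suc.prems]
  proof (rule card_UN_disjoint[OF Suc.prems])
    show "\<forall>i\<in>S. finite ((#) i ` ({ys. length ys = R \<and> set ys = S} \<union> {ys. length ys = R \<and> set ys = S - {i}}))"
      using fin2 Suc.prems by blast
    show "\<forall>i\<in>S. \<forall>j\<in>S. i \<noteq> j \<longrightarrow> (#) i ` ({ys. length ys = R \<and> set ys = S} \<union> {ys. length ys = R \<and> set ys = S - {i}}) \<inter>
        (#) j ` ({ys. length ys = R \<and> set ys = S} \<union> {ys. length ys = R \<and> set ys = S - {j}}) = {}"
      by blast
  qed
  also have "\<dots> = (\<Sum>a\<in>S. card {ys. length ys = R \<and> set ys = S} + card {ys. length ys = R \<and> set ys = S - {a}})"
  proof (rule sum.cong[OF refl])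
    fix a assume a: "a \<in> S"
    have "card ((\<lambda>ys. a#ys) ` ({ys. length ys = R \<and> set ys = S} \<union> {ys. length ys = R \<and> set ys = S - {a}}))
       = card ({ys. length ys = R \<and> set ys = S} \<union> {ys. length ys = R \<and> set ys = S - {a}})"
      by (rule card_image) (auto simp: inj_on_def)
    also have "\<dots> = card {ys. length ys = R \<and> set ys = S} + card {ys. length ys = R \<and> set ys = S - {a}}"
      apply (rule card_Un_disjoint)
      using fin2 Suc.prems a by auto
    finally show "card ((\<lambda>ys. a#ys) ` ({ys. length ys = R \<and> set ys = S} \<union> {ys. length ys = R \<and> set ys = S - {a}})) =
      card {ys. length ys = R \<and> set ys = S} + card {ys. length ys = R \<and> set ys = S - {a}}" .
  qed
  also have "\<dots> = (\<Sum>a\<in>S. fact (card S) * Stirling R (card S) + fact (card S - 1) * Stirling R (card S - 1))"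
    using Suc.IH Suc.prems by (intro sum.cong refl) (simp add: card_Diff_singleton)
  also have "\<dots> = fact (card S) * Stirling (Suc R) (card S)"
  proof (cases "card S")
    case 0 then show ?thesis using Suc.prems by auto
  next
    case (Suc m)
    have "(\<Sum>a\<in>S. fact (card S) * Stirling R (card S) + fact (card S - 1) * Stirling R (card S - 1))
      = card S * (fact (card S) * Stirling R (card S) + fact (card S - 1) * Stirling R (card S - 1))" by simp
    also have "\<dots> = Suc m * (fact (Suc m) * Stirling R (Suc m) + fact m * Stirling R m)" using Suc by simp
    also have "\<dots> = fact (Suc m) * (Suc m * Stirling R (Suc m) + Stirling R m)"
      by (simp only: fact_Suc[of m] of_nat_id algebra_simps)
    also have "\<dots> = fact (card S) * Stirling (Suc R) (card S)" using Suc by simp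
    finally show ?thesis .
  qed
  finally show ?case .
qed


lemma card_supersets:
  assumes "T \<subseteq> N" "finite N" "card T \<le> k"
  shows "card {x. x \<subseteq> N \<and> card x = k \<and> T \<subseteq> x} = (card N - card T) choose (k - card T)"
proof -
  have finT: "finite T" using assms finite_subset by blast
  have eq: "{x. x \<subseteq> N \<and> card x = k \<and> T \<subseteq> x} = (\<lambda>B. B \<union> T) ` {B. B \<subseteq> N - T \<and> card B = k - card T}"
  proof
    show "{x. x \<subseteq> N \<and> card x = k \<and> T \<subseteq> x} \<subseteq> (\<lambda>B. B \<union> T) ` {B. B \<subseteq> N - T \<and> card B = k - card T}"
    proof
      fix x assume x: "x \<in> {x. x \<subseteq> N \<and> card x = k \<and> T \<subseteq> x}"
      have fx: "finite x" using x assms(2) finite_subset by blast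
      have "x = (x - T) \<union> T" using x by blast
      moreover have "card (x - T) = k - card T" using x fx by (simp add: card_Diff_subset finT)
      ultimately show "x \<in> (\<lambda>B. B \<union> T) ` {B. B \<subseteq> N - T \<and> card B = k - card T}"
        using x by blast
    qed
  next
    show "(\<lambda>B. B \<union> T) ` {B. B \<subseteq> N - T \<and> card B = k - card T} \<subseteq> {x. x \<subseteq> N \<and> card x = k \<and> T \<subseteq> x}"
    proof
      fix x assume "x \<in> (\<lambda>B. B \<union> T) ` {B. B \<subseteq> N - T \<and> card B = k - card T}"
      then obtain B where B: "B \<subseteq> N - T" "card B = k - card T" "x = B \<union> T" by blast
      have fB: "finite B" using B assms(2) finite_subset by blast
      have "card x = card B + card T" unfolding B(3) by (rule card_Un_disjoint[OF fB finT]) (use B(1) in blast)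
      then show "x \<in> {x. x \<subseteq> N \<and> card x = k \<and> T \<subseteq> x}" using B assms by auto
    qed
  qed
  have inj: "inj_on (\<lambda>B. B \<union> T) {B. B \<subseteq> N - T \<and> card B = k - card T}"
    by (rule inj_onI) blast
  have "card {x. x \<subseteq> N \<and> card x = k \<and> T \<subseteq> x} = card {B. B \<subseteq> N - T \<and> card B = k - card T}"
    unfolding eq by (rule card_image[OF inj])
  also have "\<dots> = card (N - T) choose (k - card T)"
    by (rule n_subsets) (use assms in auto)
  also have "card (N - T) = card N - card T" using assms finT by (simp add: card_Diff_subset)
  finally show ?thesis .
qed
lemma sum_by_card_set:
  fixes g :: "nat \<Rightarrow> real"
  assumes fA: "finite A"
  shows "(\<Sum>y\<in>{y. set y \<subseteq> A \<and> length y = R}. g (card (set y)))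
       = (\<Sum>l=0..card A. real ((card A choose l) * fact l * Stirling R l) * g l)"
proof -
  let ?Y = "{y. set y \<subseteq> A \<and> length y = R}"
  have fY: "finite ?Y" by (rule finite_lists_length_eq[OF fA])
  have img: "(\<lambda>y. card (set y)) ` ?Y \<subseteq> {0..card A}"
    using card_mono[OF fA] by auto
  have "(\<Sum>y\<in>?Y. g (card (set y))) = (\<Sum>l=0..card A. \<Sum>y\<in>{y\<in>?Y. card (set y) = l}. g (card (set y)))"
    by (rule sum.group[OF fY finite_atLeastAtMost img, symmetric])
  also have "\<dots> = (\<Sum>l=0..card A. real ((card A choose l) * fact l * Stirling R l) * g l)"
  proof (rule sum.cong[OF refl])
    fix l assume "l \<in> {0..card A}"
    let ?Ss = "{S. S \<subseteq> A \<and> card S = l}"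
    have eq: "{y\<in>?Y. card (set y) = l} = (\<Union>S\<in>?Ss. {ys. length ys = R \<and> set ys = S})"
      by auto
    have fSs: "finite ?Ss" by (rule finite_subset[of _ "Pow A"]) (blast, simp add: fA)
    have "card {y\<in>?Y. card (set y) = l} = (\<Sum>S\<in>?Ss. card {ys. length ys = R \<and> set ys = S})"
      unfolding eq
    proof (rule card_UN_disjoint[OF fSs])
      show "\<forall>S\<in>?Ss. finite {ys. length ys = R \<and> set ys = S}"
      proof
        fix S assume "S \<in> ?Ss"
        then have "{ys. length ys = R \<and> set ys = S} \<subseteq> ?Y" by auto
        then show "finite {ys. length ys = R \<and> set ys = S}" using fY finite_subset by blast
      qed
      show "\<forall>i\<in>?Ss. \<forall>j\<in>?Ss. i \<noteq> j \<longrightarrow> {ys. length ys = R \<and> set ys = i} \<inter> {ys. length ys = R \<and> set ys = j} = {}"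
        by blast
    qed
    also have "\<dots> = (\<Sum>S\<in>?Ss. fact l * Stirling R l)"
    proof (rule sum.cong[OF refl])
      fix S assume S: "S \<in> ?Ss"
      then have "finite S" using fA finite_subset by blast
      then show "card {ys. length ys = R \<and> set ys = S} = fact l * Stirling R l"
        using card_lists_set_eq[of S R] S by simp
    qed
    also have "\<dots> = (card A choose l) * fact l * Stirling R l"
      using n_subsets[OF fA, of l] by simp
    finally have c: "card {y\<in>?Y. card (set y) = l} = (card A choose l) * fact l * Stirling R l" .
    have "(\<Sum>y\<in>{y\<in>?Y. card (set y) = l}. g (card (set y))) = (\<Sum>y\<in>{y\<in>?Y. card (set y) = l}. g l)"
      by (rule sum.cong) auto
    also have "\<dots> = real (card {y\<in>?Y. card (set y) = l}) * g l" by simp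
    finally show "(\<Sum>y\<in>{y\<in>?Y. card (set y) = l}. g (card (set y))) = real ((card A choose l) * fact l * Stirling R l) * g l"
      using c by simp
  qed
  finally show ?thesis .
qed
lemma log2_le_minus_one: "0 < (z::real) \<Longrightarrow> log 2 z \<le> (z - 1) / ln 2"
  unfolding log_def using ln_le_minus_one[of z] by (simp add: divide_right_mono)

lemma if_mult_zero: "(if (p::real) * w = 0 then 0 else p * w * L) = p * (if w = 0 then 0 else w * L)"
  by auto

lemma fin_inputs: "finite (cc_inputs n k)"
  unfolding cc_inputs_def by (rule finite_subset[of _ "Pow {0..<n}"]) (blast, simp)

lemma fin_outputs: "finite (cc_outputs n R)"
  unfolding cc_outputs_def
  by (rule finite_subset[OF _ finite_lists_length_eq[OF finite_atLeastLessThan[of 0 n], of R]]) blast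

lemma card_inputs: "card (cc_inputs n k) = n choose k"
  unfolding cc_inputs_def using n_subsets[OF finite_atLeastLessThan[of 0 n], of k] by simp

lemma outputs_in: "x \<in> cc_inputs n k \<Longrightarrow> {y\<in>cc_outputs n R. set y \<subseteq> x} = {y. set y \<subseteq> x \<and> length y = R}"
  unfolding cc_inputs_def cc_outputs_def by blast

lemma input_props: "x \<in> cc_inputs n k \<Longrightarrow> finite x \<and> card x = k \<and> x \<subseteq> {0..<n}"
  unfolding cc_inputs_def using finite_subset by blast

lemma sum_trans:
  assumes "x \<in> cc_inputs n k" "0 < k"
  shows "(\<Sum>y\<in>cc_outputs n R. cc_trans k R x y) = 1"
proof -
  have "(\<Sum>y\<in>cc_outputs n R. cc_trans k R x y) = (\<Sum>y\<in>cc_outputs n R. if set y \<subseteq> x then 1 / real k ^ R else 0)"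
    unfolding cc_trans_def by simp
  also have "\<dots> = (\<Sum>y\<in>{y\<in>cc_outputs n R. set y \<subseteq> x}. 1 / real k ^ R)"
    by (rule sum.inter_filter[OF fin_outputs, symmetric])
  also have "\<dots> = real (card {y. set y \<subseteq> x \<and> length y = R}) * (1 / real k ^ R)"
    unfolding outputs_in[OF assms(1)] by simp
  also have "card {y. set y \<subseteq> x \<and> length y = R} = k ^ R"
    using card_lists_length_eq[of x R] input_props[OF assms(1)] by simp
  finally show ?thesis using assms(2) by simp
qed

lemma sum_out_prob:
  assumes "cc_input_dist n k p" "0 < k"
  shows "(\<Sum>y\<in>cc_outputs n R. cc_out_prob n k R p y) = 1"
proof -
  have "(\<Sum>y\<in>cc_outputs n R. cc_out_prob n k R p y)
      = (\<Sum>x\<in>cc_inputs n k. \<Sum>y\<in>cc_outputs n R. p x * cc_trans k R x y)"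
    unfolding cc_out_prob_def by (rule sum.swap)
  also have "\<dots> = (\<Sum>x\<in>cc_inputs n k. p x * (\<Sum>y\<in>cc_outputs n R. cc_trans k R x y))"
    by (simp add: sum_distrib_left)
  also have "\<dots> = (\<Sum>x\<in>cc_inputs n k. p x)"
    using sum_trans[OF _ assms(2)] by simp
  finally show ?thesis using assms(1) unfolding cc_input_dist_def by simp
qed

lemma out_prob_nonneg:
  assumes "cc_input_dist n k p"
  shows "0 \<le> cc_out_prob n k R p y"
  unfolding cc_out_prob_def cc_trans_def using assms unfolding cc_input_dist_def
  by (intro sum_nonneg) simp

lemma out_prob_ge:
  assumes "cc_input_dist n k p" "x \<in> cc_inputs n k"
  shows "p x * cc_trans k R x y \<le> cc_out_prob n k R p y"
  unfolding cc_out_prob_def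
  by (rule member_le_sum[OF assms(2) _ fin_inputs])
     (use assms in \<open>simp add: cc_input_dist_def cc_trans_def\<close>)

lemma uniform_dist:
  assumes "k \<le> n"
  shows "cc_input_dist n k (cc_uniform n k)"
  unfolding cc_input_dist_def cc_uniform_def using assms by (simp add: card_inputs)

lemma uniform_out:
  assumes "k < n" "0 < k" "y \<in> cc_outputs n R" "card (set y) \<le> k"
  shows "cc_out_prob n k R (cc_uniform n k) y
     = real ((n - card (set y)) choose (k - card (set y))) / (real (n choose k) * real k ^ R)"
proof -
  have sub: "set y \<subseteq> {0..<n}" using assms(3) unfolding cc_outputs_def by blast
  have "cc_out_prob n k R (cc_uniform n k) y
      = (\<Sum>x\<in>cc_inputs n k. if set y \<subseteq> x then 1 / (real (n choose k) * real k ^ R) else 0)"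
    unfolding cc_out_prob_def cc_uniform_def cc_trans_def by (intro sum.cong) auto
  also have "\<dots> = (\<Sum>x\<in>{x\<in>cc_inputs n k. set y \<subseteq> x}. 1 / (real (n choose k) * real k ^ R))"
    by (rule sum.inter_filter[OF fin_inputs, symmetric])
  also have "{x\<in>cc_inputs n k. set y \<subseteq> x} = {x. x \<subseteq> {0..<n} \<and> card x = k \<and> set y \<subseteq> x}"
    unfolding cc_inputs_def by blast
  also have "(\<Sum>x\<in>{x. x \<subseteq> {0..<n} \<and> card x = k \<and> set y \<subseteq> x}. 1 / (real (n choose k) * real k ^ R))
     = real (card {x. x \<subseteq> {0..<n} \<and> card x = k \<and> set y \<subseteq> x}) / (real (n choose k) * real k ^ R)"
    by simp
  also have "card {x. x \<subseteq> {0..<n} \<and> card x = k \<and> set y \<subseteq> x} = (n - card (set y)) choose (k - card (set y))"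
    using card_supersets[OF sub _ assms(4)] by simp
  finally show ?thesis .
qed
lemma stirling_sum_reindex:
  fixes f :: "nat \<Rightarrow> real"
  assumes "0 < R"
  shows "(\<Sum>l=0..k. real ((k choose l) * fact l * Stirling R l) * f l)
       = (\<Sum>l=1..min k R. real (k choose l) * real (Stirling R l) * fact l * f l)"
proof -
  have "(\<Sum>l=1..min k R. real ((k choose l) * fact l * Stirling R l) * f l)
      = (\<Sum>l=0..k. real ((k choose l) * fact l * Stirling R l) * f l)"
  proof (rule sum.mono_neutral_left)
    show "finite {0..k}" by simp
    show "{1..min k R} \<subseteq> {0..k}" by auto
    show "\<forall>i\<in>{0..k} - {1..min k R}. real ((k choose i) * fact i * Stirling R i) * f i = 0"
    proof
      fix i assume i: "i \<in> {0..k} - {1..min k R}"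
      have "Stirling R i = 0"
      proof (cases "i = 0")
        case True
        then show ?thesis using assms by (cases R) auto
      next
        case False
        then have "R < i" using i by auto
        then show ?thesis by simp
      qed
      then show "real ((k choose i) * fact i * Stirling R i) * f i = 0" by simp
    qed
  qed
  also have "(\<Sum>l=1..min k R. real ((k choose l) * fact l * Stirling R l) * f l)
      = (\<Sum>l=1..min k R. real (k choose l) * real (Stirling R l) * fact l * f l)"
    by (intro sum.cong refl) (simp add: of_nat_fact)
  finally show ?thesis by simp
qed

lemma D_const:
  assumes "0 < k" "k < n" "0 < R" "x \<in> cc_inputs n k"
  shows "(\<Sum>y\<in>cc_outputs n R. if cc_trans k R x y = 0 then 0
           else cc_trans k R x y * log 2 (cc_trans k R x y / cc_out_prob n k R (cc_uniform n k) y))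
       = log 2 (real (n choose k))
           - (1 / real k ^ R) * (\<Sum>l=1..min k R.
                real (k choose l) * real (Stirling R l) * fact l
                * log 2 (real ((n - l) choose (k - l))))"
proof -
  define K where "K = real k ^ R"
  define C where "C = real (n choose k)"
  define b where "b l = real ((n - l) choose (k - l))" for l
  define c where "c l = real ((k choose l) * fact l * Stirling R l)" for l
  define u where "u = cc_out_prob n k R (cc_uniform n k)"
  have Kpos: "K > 0" unfolding K_def using assms by simp
  have Cpos: "C > 0" unfolding C_def using assms by simp
  have bpos: "l \<le> k \<Longrightarrow> b l > 0" for l unfolding b_def using assms by simp
  obtain fx: "finite x" and cx: "card x = k" and sx: "x \<subseteq> {0..<n}" using input_props[OF assms(4)] by blast
  have step1: "(if cc_trans k R x y = 0 then 0 else cc_trans k R x y * log 2 (cc_trans k R x y / u y))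
     = (if set y \<subseteq> x then (1 / K) * (log 2 C - log 2 (b (card (set y)))) else 0)"
    if y: "y \<in> cc_outputs n R" for y
  proof (cases "set y \<subseteq> x")
    case True
    have cy: "card (set y) \<le> k" using card_mono[OF fx True] cx by simp
    have W: "cc_trans k R x y = 1 / K" unfolding cc_trans_def K_def using True by simp
    have uy: "u y = b (card (set y)) / (C * K)"
      unfolding u_def b_def C_def K_def by (rule uniform_out[OF assms(2) assms(1) y cy])
    have "cc_trans k R x y / u y = C / b (card (set y))"
      unfolding W uy using Kpos Cpos bpos[OF cy] by (simp add: field_simps)
    then have "log 2 (cc_trans k R x y / u y) = log 2 C - log 2 (b (card (set y)))"
      using Cpos bpos[OF cy] by (simp add: log_divide)
    then show ?thesis using W True Kpos by simp
  next
    case False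
    then show ?thesis unfolding cc_trans_def by simp
  qed
  have "(\<Sum>y\<in>cc_outputs n R. if cc_trans k R x y = 0 then 0
           else cc_trans k R x y * log 2 (cc_trans k R x y / u y))
     = (\<Sum>y\<in>cc_outputs n R. if set y \<subseteq> x then (1 / K) * (log 2 C - log 2 (b (card (set y)))) else 0)"
    using step1 by (rule sum.cong[OF refl])
  also have "\<dots> = (\<Sum>y\<in>{y\<in>cc_outputs n R. set y \<subseteq> x}. (1 / K) * (log 2 C - log 2 (b (card (set y)))))"
    by (rule sum.inter_filter[OF fin_outputs, symmetric])
  also have "\<dots> = (\<Sum>y\<in>{y. set y \<subseteq> x \<and> length y = R}. (\<lambda>l. (1 / K) * (log 2 C - log 2 (b l))) (card (set y)))"
    unfolding outputs_in[OF assms(4)] by simp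
  also have "\<dots> = (\<Sum>l=0..k. c l * ((1 / K) * (log 2 C - log 2 (b l))))"
    unfolding c_def using sum_by_card_set[OF fx, of "\<lambda>l. (1 / K) * (log 2 C - log 2 (b l))" R] cx by simp
  also have "\<dots> = (log 2 C / K) * (\<Sum>l=0..k. c l) - (1 / K) * (\<Sum>l=0..k. c l * log 2 (b l))"
  proof -
    have "(\<Sum>l=0..k. c l * ((1 / K) * (log 2 C - log 2 (b l))))
        = (\<Sum>l=0..k. (log 2 C / K) * c l - (1 / K) * (c l * log 2 (b l)))"
      by (intro sum.cong refl) (simp add: algebra_simps)
    also have "\<dots> = (\<Sum>l=0..k. (log 2 C / K) * c l) - (\<Sum>l=0..k. (1 / K) * (c l * log 2 (b l)))"
      by (rule sum_subtractf)
    finally show ?thesis by (simp only: sum_distrib_left)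
  qed
  also have "(\<Sum>l=0..k. c l) = K"
  proof -
    have "(\<Sum>y\<in>{y. set y \<subseteq> x \<and> length y = R}. (\<lambda>l. 1::real) (card (set y))) = (\<Sum>l=0..k. c l * 1)"
      unfolding c_def using sum_by_card_set[OF fx, of "\<lambda>l. 1" R] cx by simp
    moreover have "(\<Sum>y\<in>{y. set y \<subseteq> x \<and> length y = R}. (\<lambda>l. 1::real) (card (set y))) = K"
      using card_lists_length_eq[OF fx, of R] cx unfolding K_def by simp
    ultimately show ?thesis by simp
  qed
  also have "(\<Sum>l=0..k. c l * log 2 (b l)) = (\<Sum>l=1..min k R.
                real (k choose l) * real (Stirling R l) * fact l * log 2 (real ((n - l) choose (k - l))))"
    unfolding c_def b_def by (rule stirling_sum_reindex[OF assms(3)])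
  finally show ?thesis unfolding u_def C_def K_def using Kpos unfolding K_def by simp
qed
lemma mi_uniform:
  assumes "0 < k" "k < n" "0 < R"
  shows "cc_mutual_info n k R (cc_uniform n k) =
           log 2 (real (n choose k))
           - (1 / real k ^ R) * (\<Sum>l=1..min k R.
                real (k choose l) * real (Stirling R l) * fact l
                * log 2 (real ((n - l) choose (k - l))))"
    (is "_ = ?Cst")
proof -
  have Cpos: "real (n choose k) > 0" using assms by simp
  have "cc_mutual_info n k R (cc_uniform n k)
      = (\<Sum>x\<in>cc_inputs n k. (1 / real (n choose k)) * ?Cst)"
    unfolding cc_mutual_info_def
  proof (rule sum.cong[OF refl])
    fix x assume x: "x \<in> cc_inputs n k"
    have "(\<Sum>y\<in>cc_outputs n R.
            if cc_uniform n k x * cc_trans k R x y = 0 then 0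
            else cc_uniform n k x * cc_trans k R x y *
                 log 2 (cc_trans k R x y / cc_out_prob n k R (cc_uniform n k) y))
       = (\<Sum>y\<in>cc_outputs n R. cc_uniform n k x * (if cc_trans k R x y = 0 then 0
            else cc_trans k R x y * log 2 (cc_trans k R x y / cc_out_prob n k R (cc_uniform n k) y)))"
      by (intro sum.cong refl) (rule if_mult_zero)
    also have "\<dots> = cc_uniform n k x * ?Cst"
      by (simp only: sum_distrib_left[symmetric] D_const[OF assms x])
    finally show "(\<Sum>y\<in>cc_outputs n R.
            if cc_uniform n k x * cc_trans k R x y = 0 then 0
            else cc_uniform n k x * cc_trans k R x y *
                 log 2 (cc_trans k R x y / cc_out_prob n k R (cc_uniform n k) y))
       = (1 / real (n choose k)) * ?Cst" unfolding cc_uniform_def .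
  qed
  also have "\<dots> = ?Cst" using Cpos by (simp add: card_inputs)
  finally show ?thesis .
qed

lemma mi_le:
  assumes "0 < k" "k < n" "0 < R" and p: "cc_input_dist n k p"
  shows "cc_mutual_info n k R p \<le>
           log 2 (real (n choose k))
           - (1 / real k ^ R) * (\<Sum>l=1..min k R.
                real (k choose l) * real (Stirling R l) * fact l
                * log 2 (real ((n - l) choose (k - l))))"
    (is "_ \<le> ?Cst")
proof -
  define X where "X = cc_inputs n k"
  define Y where "Y = cc_outputs n R"
  define W where "W = cc_trans k R"
  define q where "q = cc_out_prob n k R p"
  define u where "u = cc_out_prob n k R (cc_uniform n k)"
  define D where "D x = (\<Sum>y\<in>Y. if W x y = 0 then 0 else W x y * log 2 (W x y / u y))" for x
  have ud: "cc_input_dist n k (cc_uniform n k)" using uniform_dist assms by simp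
  have pnn: "x \<in> X \<Longrightarrow> 0 \<le> p x" for x using p unfolding cc_input_dist_def X_def by blast
  have psum: "(\<Sum>x\<in>X. p x) = 1" using p unfolding cc_input_dist_def X_def by blast
  have Wnn: "0 \<le> W x y" for x y unfolding W_def cc_trans_def by simp
  have DC: "x \<in> X \<Longrightarrow> D x = ?Cst" for x
    unfolding D_def Y_def W_def u_def X_def using D_const[OF assms(1-3)] by blast
  have pt: "(if p x * W x y = 0 then 0 else p x * W x y * log 2 (W x y / q y))
      \<le> p x * (if W x y = 0 then 0 else W x y * log 2 (W x y / u y)) + p x * W x y * ((u y / q y - 1) / ln 2)"
    if x: "x \<in> X" and y: "y \<in> Y" for x y
  proof (cases "p x * W x y = 0")
    case True
    then show ?thesis by auto
  next
    case False
    have px: "p x > 0" using False pnn[OF x] by (cases "p x = 0") auto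
    have Wne: "W x y \<noteq> 0" using False by auto
    then have sy: "set y \<subseteq> x" unfolding W_def cc_trans_def by (auto split: if_splits)
    have Wpos: "W x y > 0" using Wne Wnn[of x y] by simp
    have pW: "p x * W x y > 0" using px Wpos by simp
    have qpos: "q y > 0" using out_prob_ge[OF p, of x R y] x pW unfolding q_def W_def X_def by simp
    obtain fx: "finite x" and cx: "card x = k" using input_props[of x n k] x unfolding X_def by blast
    have cy: "card (set y) \<le> k" using card_mono[OF fx sy] cx by simp
    have upos: "u y > 0"
      unfolding u_def using uniform_out[OF assms(2) assms(1) _ cy] y assms unfolding Y_def by simp
    have "log 2 (W x y / q y) = log 2 ((W x y / u y) * (u y / q y))"
      using upos by simp
    also have "\<dots> = log 2 (W x y / u y) + log 2 (u y / q y)"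
      using Wpos upos qpos by (simp only: log_mult) simp
    finally have l: "log 2 (W x y / q y) = log 2 (W x y / u y) + log 2 (u y / q y)" .
    have "log 2 (u y / q y) \<le> (u y / q y - 1) / ln 2"
      using upos qpos by (intro log2_le_minus_one) simp
    then have "p x * W x y * log 2 (u y / q y) \<le> p x * W x y * ((u y / q y - 1) / ln 2)"
      using pW by (intro mult_left_mono) simp_all
    then show ?thesis using False Wne l by (simp add: algebra_simps)
  qed
  have "cc_mutual_info n k R p
     = (\<Sum>x\<in>X. \<Sum>y\<in>Y. if p x * W x y = 0 then 0 else p x * W x y * log 2 (W x y / q y))"
    unfolding cc_mutual_info_def X_def Y_def W_def q_def ..
  also have "\<dots> \<le> (\<Sum>x\<in>X. \<Sum>y\<in>Y. p x * (if W x y = 0 then 0 else W x y * log 2 (W x y / u y))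
                       + p x * W x y * ((u y / q y - 1) / ln 2))"
    using pt by (intro sum_mono) blast
  also have "\<dots> = (\<Sum>x\<in>X. p x * D x) + (\<Sum>x\<in>X. \<Sum>y\<in>Y. p x * W x y * ((u y / q y - 1) / ln 2))"
    unfolding D_def by (simp add: sum.distrib sum_distrib_left)
  also have "(\<Sum>x\<in>X. p x * D x) = ?Cst"
  proof -
    have "(\<Sum>x\<in>X. p x * D x) = (\<Sum>x\<in>X. p x * ?Cst)" using DC by simp
    also have "\<dots> = ?Cst" using psum by (simp add: sum_distrib_right[symmetric])
    finally show ?thesis .
  qed
  also have "(\<Sum>x\<in>X. \<Sum>y\<in>Y. p x * W x y * ((u y / q y - 1) / ln 2))
      = (\<Sum>y\<in>Y. (\<Sum>x\<in>X. p x * W x y) * ((u y / q y - 1) / ln 2))"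
    by (subst sum.swap) (simp only: sum_distrib_right)
  also have "\<dots> \<le> (\<Sum>y\<in>Y. (u y - q y) / ln 2)"
  proof (rule sum_mono)
    fix y assume y: "y \<in> Y"
    have qd: "(\<Sum>x\<in>X. p x * W x y) = q y" unfolding q_def cc_out_prob_def X_def W_def ..
    have unn: "0 \<le> u y" unfolding u_def by (rule out_prob_nonneg[OF ud])
    show "(\<Sum>x\<in>X. p x * W x y) * ((u y / q y - 1) / ln 2) \<le> (u y - q y) / ln 2"
    proof (cases "q y = 0")
      case True then show ?thesis using unn qd by simp
    next
      case False then show ?thesis using qd by (simp add: field_simps)
    qed
  qed
  also have "(\<Sum>y\<in>Y. (u y - q y) / ln 2) = 0"
  proof -
    have "(\<Sum>y\<in>Y. (u y - q y) / ln 2) = ((\<Sum>y\<in>Y. u y) - (\<Sum>y\<in>Y. q y)) / ln 2"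
      by (simp only: sum_divide_distrib[symmetric] sum_subtractf)
    also have "\<dots> = 0" unfolding u_def q_def Y_def
      using sum_out_prob[OF ud assms(1)] sum_out_prob[OF p assms(1)] by simp
    finally show ?thesis .
  qed
  finally show ?thesis by simp
qed
theorem theorem1:
  fixes n k R :: nat
  assumes "0 < k" and "k < n" and "0 < R"
  shows "cc_capacity n k R =
           log 2 (real (n choose k))
           - (1 / real k ^ R) * (\<Sum>l=1..min k R.
                real (k choose l) * real (Stirling R l) * fact l
                * log 2 (real ((n - l) choose (k - l))))
       \<and> cc_input_dist n k (cc_uniform n k)
       \<and> cc_mutual_info n k R (cc_uniform n k) = cc_capacity n k R"
proof -
  let ?Cst = "log 2 (real (n choose k))
           - (1 / real k ^ R) * (\<Sum>l=1..min k R.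
                real (k choose l) * real (Stirling R l) * fact l
                * log 2 (real ((n - l) choose (k - l))))"
  have ud: "cc_input_dist n k (cc_uniform n k)" using uniform_dist assms by simp
  have cap: "cc_capacity n k R = ?Cst"
    unfolding cc_capacity_def
  proof (rule cSup_eq_maximum)
    show "?Cst \<in> cc_mutual_info n k R ` {p. cc_input_dist n k p}"
      using mi_uniform[OF assms] ud by (metis (mono_tags) image_eqI mem_Collect_eq)
    show "x \<le> ?Cst" if "x \<in> cc_mutual_info n k R ` {p. cc_input_dist n k p}" for x
      using that mi_le[OF assms] by blast
  qed
  show ?thesis using cap ud mi_uniform[OF assms] by simp
qed

end
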